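(* Let $(G,\cdot)$ be a loop with identity $e$ and $(H,\cdot)$ a non-trivial subloop such that $(xs\cdot z)s=x(sz\cdot s)$ for all $x,z\in G$, $s\in H$. Let $(U,V,W)\in\mathrm{S_{1st}AUT}(G_H)$, $s_1=eU$ and $s_2=eV$. Then $A=UR_{s_1}^{-1}\in\mathrm{S_{1st}PAUT}(G_H)$ with first Smarandache companion $c=s_1s_2\cdot s_1$ (i.e. $(A,AR_c,AR_c)\in\mathrm{S_{1st}AUT}(G_H)$), and $$(U,V,W)=(A,AR_c,AR_c)\,(R_{s_1}^{-1},L_{s_1}R_{s_1},R_{s_1})^{-1}.$$
   Context: Juxtaposition binds more tightly than $\cdot$. Maps are written on the right and composed left to right; $xR_s=x\cdot s$, $xL_s=s\cdot x$. $SSYM(G_H)$ is the set of bijections $A$ of $G$ with $HA=H$. $\mathrm{S_{1st}AUT}(G_H)$ is the set of triples $(U,V,W)$ with $U,V,W\in SSYM(G_H)$ and $xU\cdot yV=(x\cdot y)W$ for all $x,y\in G$; triples are multiplied componentwise. $\mathrm{S_{1st}PAUT}(G_H)$ is the set of $A\in SSYM(G_H)$ for which there is $c\in H$ with $(A,AR_c,AR_c)\in\mathrm{S_{1st}AUT}(G_H)$; $c$ is called a first Smarandache companion of $A$. *)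

theory Defs
  imports Main
begin

definition loop :: "'a set \<Rightarrow> ('a \<Rightarrow> 'a \<Rightarrow> 'a) \<Rightarrow> 'a \<Rightarrow> bool" where
  "loop G m e \<longleftrightarrow> e \<in> G \<and> (\<forall>x\<in>G. \<forall>y\<in>G. m x y \<in> G)
     \<and> (\<forall>x\<in>G. m e x = x \<and> m x e = x)
     \<and> (\<forall>a\<in>G. \<forall>b\<in>G. (\<exists>!x. x \<in> G \<and> m a x = b) \<and> (\<exists>!y. y \<in> G \<and> m y a = b))"

definition subloop :: "'a set \<Rightarrow> 'a set \<Rightarrow> ('a \<Rightarrow> 'a \<Rightarrow> 'a) \<Rightarrow> 'a \<Rightarrow> bool" where
  "subloop H G m e \<longleftrightarrow> H \<subseteq> G \<and> loop H m e"

text \<open>Maps are written on the right and composed left to right: x (f ; g) = (x f) g.\<close>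
definition lcomp :: "('a \<Rightarrow> 'a) \<Rightarrow> ('a \<Rightarrow> 'a) \<Rightarrow> ('a \<Rightarrow> 'a)" where
  "lcomp f g = g \<circ> f"

definition rtr :: "('a \<Rightarrow> 'a \<Rightarrow> 'a) \<Rightarrow> 'a \<Rightarrow> 'a \<Rightarrow> 'a" where
  "rtr m s = (\<lambda>x. m x s)"

definition ltr :: "('a \<Rightarrow> 'a \<Rightarrow> 'a) \<Rightarrow> 'a \<Rightarrow> 'a \<Rightarrow> 'a" where
  "ltr m s = (\<lambda>x. m s x)"

definition SSYM :: "'a set \<Rightarrow> 'a set \<Rightarrow> ('a \<Rightarrow> 'a) set" where
  "SSYM G H = {A. bij_betw A G G \<and> A ` H = H}"

definition S1AUT :: "'a set \<Rightarrow> ('a \<Rightarrow> 'a \<Rightarrow> 'a) \<Rightarrow> 'a set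
     \<Rightarrow> (('a \<Rightarrow> 'a) \<times> ('a \<Rightarrow> 'a) \<times> ('a \<Rightarrow> 'a)) set" where
  "S1AUT G m H = {(U, V, W). U \<in> SSYM G H \<and> V \<in> SSYM G H \<and> W \<in> SSYM G H
      \<and> (\<forall>x\<in>G. \<forall>y\<in>G. m (U x) (V y) = W (m x y))}"

definition first_companion :: "'a set \<Rightarrow> ('a \<Rightarrow> 'a \<Rightarrow> 'a) \<Rightarrow> 'a set \<Rightarrow> ('a \<Rightarrow> 'a) \<Rightarrow> 'a \<Rightarrow> bool" where
  "first_companion G m H A c \<longleftrightarrow> c \<in> H \<and>
     (A, lcomp A (rtr m c), lcomp A (rtr m c)) \<in> S1AUT G m H"

definition S1PAUT :: "'a set \<Rightarrow> ('a \<Rightarrow> 'a \<Rightarrow> 'a) \<Rightarrow> 'a set \<Rightarrow> ('a \<Rightarrow> 'a) set" where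
  "S1PAUT G m H = {A. A \<in> SSYM G H \<and> (\<exists>c. first_companion G m H A c)}"

definition tmul :: "('a \<Rightarrow> 'a) \<times> ('a \<Rightarrow> 'a) \<times> ('a \<Rightarrow> 'a) \<Rightarrow> ('a \<Rightarrow> 'a) \<times> ('a \<Rightarrow> 'a) \<times> ('a \<Rightarrow> 'a)
     \<Rightarrow> ('a \<Rightarrow> 'a) \<times> ('a \<Rightarrow> 'a) \<times> ('a \<Rightarrow> 'a)" where
  "tmul T S = (case T of (P1, Q1, R1) \<Rightarrow> case S of (P2, Q2, R2) \<Rightarrow>
      (lcomp P1 P2, lcomp Q1 Q2, lcomp R1 R2))"

definition tinv :: "'a set \<Rightarrow> ('a \<Rightarrow> 'a) \<times> ('a \<Rightarrow> 'a) \<times> ('a \<Rightarrow> 'a) \<Rightarrow> ('a \<Rightarrow> 'a) \<times> ('a \<Rightarrow> 'a) \<times> ('a \<Rightarrow> 'a)" where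
  "tinv G T = (case T of (P, Q, R) \<Rightarrow> (inv_into G P, inv_into G Q, inv_into G R))"

text \<open>Equality of triples of maps of G (maps are only relevant on G).\<close>
definition teq_on :: "'a set \<Rightarrow> ('a \<Rightarrow> 'a) \<times> ('a \<Rightarrow> 'a) \<times> ('a \<Rightarrow> 'a) \<Rightarrow> ('a \<Rightarrow> 'a) \<times> ('a \<Rightarrow> 'a) \<times> ('a \<Rightarrow> 'a) \<Rightarrow> bool" where
  "teq_on G T S = (case T of (P1, Q1, R1) \<Rightarrow> case S of (P2, Q2, R2) \<Rightarrow>
      (\<forall>x\<in>G. P1 x = P2 x \<and> Q1 x = Q2 x \<and> R1 x = R2 x))"

end

theory Submission
  imports Defs
begin

lemma loop_D1: "loop G m e \<Longrightarrow> e \<in> G"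
  unfolding loop_def by (elim conjE) assumption
lemma loop_D2: "loop G m e \<Longrightarrow> \<forall>x\<in>G. \<forall>y\<in>G. m x y \<in> G"
  unfolding loop_def by (elim conjE) assumption
lemma loop_D3: "loop G m e \<Longrightarrow> \<forall>x\<in>G. m e x = x \<and> m x e = x"
  unfolding loop_def by (elim conjE) assumption
lemma loop_D4: "loop G m e \<Longrightarrow> \<forall>a\<in>G. \<forall>b\<in>G. (\<exists>!x. x \<in> G \<and> m a x = b) \<and> (\<exists>!y. y \<in> G \<and> m y a = b)"
  unfolding loop_def by (elim conjE) assumption

lemma loop_closed: "loop G m e \<Longrightarrow> x \<in> G \<Longrightarrow> y \<in> G \<Longrightarrow> m x y \<in> G"
  using loop_D2[of G m e] by simp

lemma loop_e: "loop G m e \<Longrightarrow> e \<in> G" by (rule loop_D1)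

lemma loop_id: "loop G m e \<Longrightarrow> x \<in> G \<Longrightarrow> m e x = x \<and> m x e = x"
  using loop_D3[of G m e] by simp

lemma loop_ru: "loop G m e \<Longrightarrow> a \<in> G \<Longrightarrow> b \<in> G \<Longrightarrow> \<exists>!y. y \<in> G \<and> m y a = b"
  using loop_D4[of G m e] by simp

lemma loop_lu: "loop G m e \<Longrightarrow> a \<in> G \<Longrightarrow> b \<in> G \<Longrightarrow> \<exists>!y. y \<in> G \<and> m a y = b"
  using loop_D4[of G m e] by simp

lemma ex1_eq: "\<exists>!z. P z \<Longrightarrow> P x \<Longrightarrow> P y \<Longrightarrow> x = y"
  by auto

lemma loop_rinj: assumes "loop G m e" "s \<in> G" shows "inj_on (rtr m s) G"
proof (rule inj_onI)
  fix x y assume xy: "x \<in> G" "y \<in> G" "rtr m s x = rtr m s y"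
  have "m y s \<in> G" using loop_closed[OF assms(1)] assms xy by simp
  hence "\<exists>!z. z \<in> G \<and> m z s = m y s" using loop_ru[OF assms(1) assms(2)] by simp
  moreover have "x \<in> G \<and> m x s = m y s" using xy unfolding rtr_def by simp
  ultimately show "x = y" using xy(2) by (metis ex1_eq)
qed

lemma loop_linj: assumes "loop G m e" "s \<in> G" shows "inj_on (ltr m s) G"
proof (rule inj_onI)
  fix x y assume xy: "x \<in> G" "y \<in> G" "ltr m s x = ltr m s y"
  have "m s y \<in> G" using loop_closed[OF assms(1)] assms xy by simp
  hence "\<exists>!z. z \<in> G \<and> m s z = m s y" using loop_lu[OF assms(1) assms(2)] by simp
  moreover have "x \<in> G \<and> m s x = m s y" using xy unfolding ltr_def by simp
  ultimately show "x = y" using xy(2) by (metis ex1_eq)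
qed

lemma loop_rsurj: assumes "loop G m e" "s \<in> G" "b \<in> G" shows "\<exists>x\<in>G. m x s = b"
  using loop_ru[OF assms] by auto

lemma loop_rbij: assumes "loop G m e" "s \<in> G" shows "bij_betw (rtr m s) G G"
  unfolding bij_betw_def
proof
  show "inj_on (rtr m s) G" using loop_rinj[OF assms] .
  show "rtr m s ` G = G"
  proof
    show "rtr m s ` G \<subseteq> G" using loop_closed[OF assms(1) _ assms(2)] unfolding rtr_def by auto
    show "G \<subseteq> rtr m s ` G"
    proof
      fix b assume "b \<in> G"
      then obtain x where "x \<in> G" "m x s = b" using loop_rsurj[OF assms(1) assms(2)] by auto
      thus "b \<in> rtr m s ` G" unfolding rtr_def by auto
    qed
  qed
qed

lemma rtr_H: assumes "subloop H G m e" "s \<in> H" shows "rtr m s ` H = H"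
proof
  have L: "loop H m e" using assms unfolding subloop_def by blast
  show "rtr m s ` H \<subseteq> H" using loop_closed[OF L _ assms(2)] unfolding rtr_def by auto
  show "H \<subseteq> rtr m s ` H"
  proof
    fix b assume "b \<in> H"
    then obtain x where "x \<in> H" "m x s = b" using loop_rsurj[OF L assms(2) \<open>b \<in> H\<close>] by auto
    thus "b \<in> rtr m s ` H" unfolding rtr_def by auto
  qed
qed

lemma rtr_SSYM: assumes "loop G m e" "subloop H G m e" "s \<in> H" shows "rtr m s \<in> SSYM G H"
proof -
  have "s \<in> G" using assms(2,3) unfolding subloop_def by blast
  thus ?thesis using loop_rbij[OF assms(1)] rtr_H[OF assms(2,3)] unfolding SSYM_def by blast
qed

lemma rtr_inv_SSYM: assumes "loop G m e" "subloop H G m e" "s \<in> H"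
  shows "inv_into G (rtr m s) \<in> SSYM G H"
proof -
  have HG: "H \<subseteq> G" using assms unfolding subloop_def by blast
  have sG: "s \<in> G" using HG assms by blast
  have b: "bij_betw (rtr m s) G G" using loop_rbij[OF assms(1) sG] .
  have i: "inj_on (rtr m s) G" using b unfolding bij_betw_def by blast
  have im: "rtr m s ` H = H" using rtr_H[OF assms(2,3)] .
  have "inv_into G (rtr m s) ` H = H"
  proof
    show "inv_into G (rtr m s) ` H \<subseteq> H"
    proof
      fix y assume "y \<in> inv_into G (rtr m s) ` H"
      then obtain h where h: "h \<in> H" "y = inv_into G (rtr m s) h" by blast
      have "h \<in> rtr m s ` H" using h(1) im by simp
      then obtain h' where h': "h' \<in> H" "rtr m s h' = h" by (auto simp del: rtr_def)
      have "inv_into G (rtr m s) h = h'" using h' HG by (intro inv_into_f_eq[OF i]) auto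
      thus "y \<in> H" using h h' by simp
    qed
    show "H \<subseteq> inv_into G (rtr m s) ` H"
    proof
      fix h assume h: "h \<in> H"
      have "inv_into G (rtr m s) (rtr m s h) = h" using h HG by (intro inv_into_f_f[OF i]) auto
      moreover have "rtr m s h \<in> H" using im h by (metis imageI)
      ultimately show "h \<in> inv_into G (rtr m s) ` H" by (metis imageI)
    qed
  qed
  thus ?thesis using bij_betw_inv_into[OF b] unfolding SSYM_def by simp
qed

lemma SSYM_comp: "A \<in> SSYM G H \<Longrightarrow> B \<in> SSYM G H \<Longrightarrow> lcomp A B \<in> SSYM G H"
proof -
  assume a: "A \<in> SSYM G H" "B \<in> SSYM G H"
  have "bij_betw (B \<circ> A) G G" using a unfolding SSYM_def by (auto intro: bij_betw_trans)
  moreover have "(B \<circ> A) ` H = B ` (A ` H)" by (rule image_comp[symmetric])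
  hence "(B \<circ> A) ` H = H" using a unfolding SSYM_def by simp
  ultimately show ?thesis unfolding SSYM_def lcomp_def by simp
qed

lemma SSYM_G: "A \<in> SSYM G H \<Longrightarrow> x \<in> G \<Longrightarrow> A x \<in> G"
  unfolding SSYM_def bij_betw_def by (metis (mono_tags, lifting) imageI mem_Collect_eq)

lemma SSYM_H: "A \<in> SSYM G H \<Longrightarrow> x \<in> H \<Longrightarrow> A x \<in> H"
  unfolding SSYM_def by (metis (mono_tags, lifting) imageI mem_Collect_eq)

theorem theorem3p7:
  fixes G H :: "'a set" and m :: "'a \<Rightarrow> 'a \<Rightarrow> 'a" and e :: 'a
    and U V W :: "'a \<Rightarrow> 'a"
  assumes "loop G m e"
    and "subloop H G m e"
    and "H \<noteq> {e}"
    and "\<forall>x\<in>G. \<forall>z\<in>G. \<forall>s\<in>H. m (m (m x s) z) s = m x (m (m s z) s)"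
    and "(U, V, W) \<in> S1AUT G m H"
  shows "let s1 = U e; s2 = V e;
             A = lcomp U (inv_into G (rtr m s1));
             c = m (m s1 s2) s1
         in A \<in> S1PAUT G m H
            \<and> first_companion G m H A c
            \<and> teq_on G (U, V, W)
                 (tmul (A, lcomp A (rtr m c), lcomp A (rtr m c))
                       (tinv G (inv_into G (rtr m s1), lcomp (ltr m s1) (rtr m s1), rtr m s1)))"
proof -
  note L = assms(1) and SL = assms(2) and bol = assms(4)
  have HG: "H \<subseteq> G" and LH: "loop H m e" using SL unfolding subloop_def by blast+
  have eH: "e \<in> H" using loop_e[OF LH] .
  have eG: "e \<in> G" using loop_e[OF L] .
  have US: "U \<in> SSYM G H" and VS: "V \<in> SSYM G H" and WS: "W \<in> SSYM G H"
    and aut: "\<forall>x\<in>G. \<forall>y\<in>G. m (U x) (V y) = W (m x y)"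
    using assms(5) unfolding S1AUT_def by simp_all
  define s1 where "s1 = U e"
  define s2 where "s2 = V e"
  define A where "A = lcomp U (inv_into G (rtr m s1))"
  define c where "c = m (m s1 s2) s1"
  have s1H: "s1 \<in> H" unfolding s1_def using SSYM_H[OF US eH] .
  have s2H: "s2 \<in> H" unfolding s2_def using SSYM_H[OF VS eH] .
  have s1G: "s1 \<in> G" and s2G: "s2 \<in> G" using s1H s2H HG by blast+
  have cH: "c \<in> H" unfolding c_def using loop_closed[OF LH] s1H s2H by blast
  have cG: "c \<in> G" using cH HG by blast
  have UG: "\<And>x. x \<in> G \<Longrightarrow> U x \<in> G" and VG: "\<And>x. x \<in> G \<Longrightarrow> V x \<in> G"
    and WG: "\<And>x. x \<in> G \<Longrightarrow> W x \<in> G"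
    using SSYM_G[OF US] SSYM_G[OF VS] SSYM_G[OF WS] by auto
  have Rb: "bij_betw (rtr m s1) G G" using loop_rbij[OF L s1G] .
  have Ri: "inj_on (rtr m s1) G" using Rb unfolding bij_betw_def by simp
  have AS: "A \<in> SSYM G H" unfolding A_def using SSYM_comp[OF US rtr_inv_SSYM[OF L SL s1H]] .
  have AG: "\<And>x. x \<in> G \<Longrightarrow> A x \<in> G" using SSYM_G[OF AS] .
  have AU: "\<And>x. x \<in> G \<Longrightarrow> m (A x) s1 = U x"
  proof -
    fix x assume x: "x \<in> G"
    have "rtr m s1 ` G = G" using Rb unfolding bij_betw_def by simp
    hence "U x \<in> rtr m s1 ` G" using UG[OF x] by simp
    hence "rtr m s1 (inv_into G (rtr m s1) (U x)) = U x" by (rule f_inv_into_f)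
    thus "m (A x) s1 = U x" unfolding A_def lcomp_def rtr_def by simp
  qed
  have W1: "\<And>y. y \<in> G \<Longrightarrow> W y = m s1 (V y)"
  proof -
    fix y assume y: "y \<in> G"
    have "m e y = y" using loop_id[OF L y] by blast
    thus "W y = m s1 (V y)" using aut[rule_format, OF eG y] unfolding s1_def by simp
  qed
  have W2: "\<And>y. y \<in> G \<Longrightarrow> W y = m (U y) s2"
  proof -
    fix y assume y: "y \<in> G"
    have "m y e = y" using loop_id[OF L y] by blast
    thus "W y = m (U y) s2" using aut[rule_format, OF y eG] unfolding s2_def by simp
  qed
  have Ac: "\<And>y. y \<in> G \<Longrightarrow> m (A y) c = m (W y) s1"
  proof -
    fix y assume y: "y \<in> G"
    have "m (W y) s1 = m (m (m (A y) s1) s2) s1" using W2 y AU by simp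
    also have "\<dots> = m (A y) c" unfolding c_def using bol[rule_format, OF AG[OF y] s2G s1H] by simp
    finally show "m (A y) c = m (W y) s1" by simp
  qed
  have aut2: "\<forall>x\<in>G. \<forall>y\<in>G. m (A x) (lcomp A (rtr m c) y) = lcomp A (rtr m c) (m x y)"
  proof (intro ballI)
    fix x y assume x: "x \<in> G" and y: "y \<in> G"
    have xy: "m x y \<in> G" using loop_closed[OF L] x y by blast
    have "lcomp A (rtr m c) (m x y) = m (W (m x y)) s1" using Ac xy unfolding lcomp_def rtr_def by simp
    also have "\<dots> = m (m (m (A x) s1) (V y)) s1" using aut x y AU by simp
    also have "\<dots> = m (A x) (m (m s1 (V y)) s1)" using bol[rule_format, OF AG[OF x] VG[OF y] s1H] by simp
    also have "\<dots> = m (A x) (m (A y) c)" using W1 Ac y by simp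
    finally show "m (A x) (lcomp A (rtr m c) y) = lcomp A (rtr m c) (m x y)"
      unfolding lcomp_def rtr_def by simp
  qed
  have ARS: "lcomp A (rtr m c) \<in> SSYM G H" using SSYM_comp[OF AS rtr_SSYM[OF L SL cH]] .
  have FC: "first_companion G m H A c"
    unfolding first_companion_def S1AUT_def using cH AS ARS aut2 by simp
  have P: "A \<in> S1PAUT G m H" unfolding S1PAUT_def using AS FC by auto
  have LRi: "inj_on (lcomp (ltr m s1) (rtr m s1)) G"
  proof (rule inj_onI)
    fix x y assume xy: "x \<in> G" "y \<in> G" "lcomp (ltr m s1) (rtr m s1) x = lcomp (ltr m s1) (rtr m s1) y"
    hence "rtr m s1 (ltr m s1 x) = rtr m s1 (ltr m s1 y)" unfolding lcomp_def by simp
    moreover have "ltr m s1 x \<in> G" "ltr m s1 y \<in> G" using xy loop_closed[OF L] s1G unfolding ltr_def by blast+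
    ultimately have "ltr m s1 x = ltr m s1 y" using inj_onD[OF Ri] by metis
    thus "x = y" using inj_onD[OF loop_linj[OF L s1G]] xy by metis
  qed
  have T: "teq_on G (U, V, W)
                 (tmul (A, lcomp A (rtr m c), lcomp A (rtr m c))
                       (tinv G (inv_into G (rtr m s1), lcomp (ltr m s1) (rtr m s1), rtr m s1)))"
    unfolding teq_on_def tmul_def tinv_def
  proof (simp only: prod.case, intro ballI conjI)
    fix x assume x: "x \<in> G"
    show "U x = lcomp A (inv_into G (inv_into G (rtr m s1))) x"
      unfolding lcomp_def using inv_into_inv_into_eq[OF Rb AG[OF x]] AU[OF x]
      unfolding rtr_def by simp
    have "inv_into G (lcomp (ltr m s1) (rtr m s1)) (m (A x) c) = V x"
      using inv_into_f_eq[OF LRi VG[OF x]] Ac[OF x] W1[OF x]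
      unfolding lcomp_def ltr_def rtr_def by simp
    thus "V x = lcomp (lcomp A (rtr m c)) (inv_into G (lcomp (ltr m s1) (rtr m s1))) x"
      unfolding lcomp_def rtr_def by simp
    have "inv_into G (rtr m s1) (m (A x) c) = W x"
      using inv_into_f_eq[OF Ri WG[OF x]] Ac[OF x] unfolding rtr_def by simp
    thus "W x = lcomp (lcomp A (rtr m c)) (inv_into G (rtr m s1)) x"
      unfolding lcomp_def rtr_def by simp
  qed
  show ?thesis unfolding Let_def s1_def[symmetric] s2_def[symmetric] A_def[symmetric] c_def[symmetric]
    by (intro conjI P FC T)
qed

end
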